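(* Let $c \in (0,1/2]$, $t_1 \in [0,1-2c]$, $t_2 \in [t_1+c,1-c]$, and $p,q\in(0,1)$ with $p\neq q$. Then \[ \frac{t_2-t_1}{1-c}\,|p-q| \;\le\; W_2(\mu_p,\mu_q) \;\le\; \frac{t_2-t_1}{1-c}\sqrt{\frac{2c(p-q)^2+(1-c)|p-q|}{1+c}}. \]
   Context: Let $S_1(x)=cx+t_1$ and $S_2(x)=cx+t_2$ on $[0,1]$, and let $F\subseteq[0,1]$ be the unique nonempty compact set with $F=S_1(F)\cup S_2(F)$. For $p\in(0,1)$, $\mu_p$ is the unique Borel probability measure on $[0,1]$ with $\mu_p = p\,\mu_p\circ S_1^{-1} + (1-p)\,\mu_p\circ S_2^{-1}$. For Borel probability measures $\mu,\nu$ on $[0,1]$ and $\rho\ge1$, $W_\rho(\mu,\nu)=\inf_{\gamma}\left(\int |x-y|^\rho\,d\gamma(x,y)\right)^{1/\rho}$, the infimum over all Borel probability measures $\gamma$ on $[0,1]^2$ with first marginal $\mu$ and second marginal $\nu$. *)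

theory Defs
  imports "HOL-Probability.Probability"
begin

text \<open>Borel probability measures on [0,1] are represented as Borel probability
measures on the real line giving full mass to {0..1}.\<close>

definition prob_on_unit :: "real measure \<Rightarrow> bool" where
  "prob_on_unit \<mu> \<longleftrightarrow> sets \<mu> = sets borel \<and> prob_space \<mu> \<and> emeasure \<mu> {0..1} = 1"

definition is_ss_measure :: "real \<Rightarrow> real \<Rightarrow> real \<Rightarrow> real \<Rightarrow> real measure \<Rightarrow> bool" where
  "is_ss_measure c t1 t2 p \<mu> \<longleftrightarrow> prob_on_unit \<mu> \<and>
     (\<forall>A\<in>sets borel. emeasure \<mu> A =
        ennreal p * emeasure \<mu> ((\<lambda>x. c * x + t1) -` A) +
        ennreal (1 - p) * emeasure \<mu> ((\<lambda>x. c * x + t2) -` A))"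

definition ss_measure :: "real \<Rightarrow> real \<Rightarrow> real \<Rightarrow> real \<Rightarrow> real measure" where
  "ss_measure c t1 t2 p = (THE \<mu>. is_ss_measure c t1 t2 p \<mu>)"

definition couplings :: "real measure \<Rightarrow> real measure \<Rightarrow> (real \<times> real) measure set" where
  "couplings \<mu> \<nu> = {\<gamma>. sets \<gamma> = sets (borel \<Otimes>\<^sub>M borel) \<and> prob_space \<gamma> \<and>
      emeasure \<gamma> ({0..1} \<times> {0..1}) = 1 \<and>
      distr \<gamma> borel fst = \<mu> \<and> distr \<gamma> borel snd = \<nu>}"

definition wasserstein :: "real \<Rightarrow> real measure \<Rightarrow> real measure \<Rightarrow> real" where
  "wasserstein \<rho> \<mu> \<nu> =
     enn2real (INF \<gamma>\<in>couplings \<mu> \<nu>. \<integral>\<^sup>+ z. ennreal (\<bar>fst z - snd z\<bar> powr \<rho>) \<partial>\<gamma>) powr (1 / \<rho>)"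

end

theory Submission
  imports Defs
begin

definition ser :: "real \<Rightarrow> ('a \<Rightarrow> real) \<Rightarrow> 'a stream \<Rightarrow> real" where
  "ser c g \<omega> = (\<Sum>n. c^n * g (\<omega> !! n))"

lemma ser_summable:
  fixes c B :: real
  assumes "0 \<le> c" "c < 1" "\<And>x. \<bar>g x\<bar> \<le> B"
  shows "summable (\<lambda>n. c^n * g (\<omega> !! n))"
proof (rule summable_comparison_test'[where g="\<lambda>n. B * c^n"])
  show "summable (\<lambda>n. B * c ^ n)" using assms by (intro summable_mult summable_geometric) auto
  fix n show "norm (c ^ n * g (\<omega> !! n)) \<le> B * c ^ n"
    using mult_right_mono[OF assms(3)[of "\<omega> !! n"], of "c^n"] assms(1) by (simp add: abs_mult mult.commute)
qed


lemma ser_Stream: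
  assumes "0 \<le> c" "c < 1" "\<And>x. \<bar>g x\<bar> \<le> B"
  shows "ser c g (x ## \<omega>) = c * ser c g \<omega> + g x"
proof -
  have s: "summable (\<lambda>n. c^n * g ((x ## \<omega>) !! n))" by (rule ser_summable[OF assms])
  have s2: "summable (\<lambda>n. c^n * g (\<omega> !! n))" by (rule ser_summable[OF assms])
  have "(\<Sum>n. c^Suc n * g ((x ## \<omega>) !! Suc n)) = ser c g (x ## \<omega>) - g x"
    using suminf_split_head[OF s] by (simp add: ser_def)
  moreover have "(\<Sum>n. c^Suc n * g ((x ## \<omega>) !! Suc n)) = c * ser c g \<omega>"
    unfolding ser_def using suminf_mult[OF s2, of c] by (simp add: mult.assoc)
  ultimately show ?thesis by simp
qed

lemma ser_bounds:
  assumes "0 \<le> c" "c < 1" "\<And>x. a \<le> g x" "\<And>x. g x \<le> b"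
  shows "a / (1 - c) \<le> ser c g \<omega>" "ser c g \<omega> \<le> b / (1 - c)"
proof -
  have B: "\<And>x. \<bar>g x\<bar> \<le> \<bar>a\<bar> + \<bar>b\<bar>" using assms(3,4) by (smt (verit))
  have s: "summable (\<lambda>n. c^n * g (\<omega> !! n))" by (rule ser_summable[OF assms(1,2) B])
  have ga: "(\<lambda>n. a * c^n) sums (a / (1 - c))"
    using sums_mult[OF geometric_sums[of c], of a] assms by (simp add: divide_simps)
  have gb: "(\<lambda>n. b * c^n) sums (b / (1 - c))"
    using sums_mult[OF geometric_sums[of c], of b] assms by (simp add: divide_simps)
  have l: "a * c^n \<le> c^n * g (\<omega> !! n)" for n
    using mult_left_mono[OF assms(3)[of "\<omega> !! n"], of "c^n"] assms(1) by (simp add: mult.commute)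
  have u: "c^n * g (\<omega> !! n) \<le> b * c^n" for n
    using mult_left_mono[OF assms(4)[of "\<omega> !! n"], of "c^n"] assms(1) by (simp add: mult.commute)
  show "a / (1 - c) \<le> ser c g \<omega>" unfolding ser_def
    using sums_le[OF _ ga s[THEN summable_sums]] l by blast
  show "ser c g \<omega> \<le> b / (1 - c)" unfolding ser_def
    using sums_le[OF _ s[THEN summable_sums] gb] u by blast
qed

lemma ser_diff:
  assumes "0 \<le> c" "c < 1" "\<And>x. \<bar>g x\<bar> \<le> B" "\<And>x. \<bar>h x\<bar> \<le> B"
  shows "ser c (\<lambda>x. g x - h x) \<omega> = ser c g \<omega> - ser c h \<omega>"
  unfolding ser_def using suminf_diff[OF ser_summable[of c g B \<omega>, OF assms(1,2,3)] ser_summable[of c h B \<omega>, OF assms(1,2,4)]]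
  by (simp add: right_diff_distrib)

lemma ser_measurable[measurable]:
  "ser c g \<in> borel_measurable (stream_space (measure_pmf P))"
proof -
  have "(\<lambda>\<omega>. g (\<omega> !! n)) \<in> borel_measurable (stream_space (measure_pmf P))" for n
    by (rule measurable_compose[OF measurable_snth]) simp
  then show ?thesis unfolding ser_def by measurable
qed

lemma ss_basic:
  assumes "is_ss_measure c t1 t2 p \<mu>"
  shows "sets \<mu> = sets borel" "prob_space \<mu>" "space \<mu> = UNIV"
  using assms unfolding is_ss_measure_def prob_on_unit_def
  by (auto dest: sets_eq_imp_space_eq)

lemma ss_repr:
  assumes ss: "is_ss_measure c t1 t2 p \<mu>" and p: "0 \<le> p" "p \<le> 1"
  shows "\<mu> = distr (measure_pmf (bernoulli_pmf p) \<Otimes>\<^sub>M \<mu>) borel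
                 (\<lambda>z. c * snd z + (if fst z then t1 else t2))"
    (is "_ = distr ?B borel ?T")
proof -
  note sb = ss_basic[OF ss]
  interpret prob_space \<mu> by (rule sb(2))
  have sm[measurable_cong]: "sets \<mu> = sets borel" by (rule sb(1))
  have Tm: "?T \<in> measurable ?B borel"
  proof -
    have f: "(\<lambda>z. fst z) \<in> measurable ?B (measure_pmf (bernoulli_pmf p))" by simp
    have "(\<lambda>z. (if fst z then t1 else t2)) \<in> borel_measurable ?B"
      by (rule measurable_compose[OF f]) simp
    moreover have "(\<lambda>z. snd z) \<in> borel_measurable ?B"
      by (rule measurable_compose[OF measurable_snd]) (simp add: measurable_cong_sets[OF refl sm])
    ultimately show ?thesis by measurable
  qed
  show ?thesis
  proof (rule measure_eqI)
    show "sets \<mu> = sets (distr ?B borel ?T)" using sm by simp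
  next
    fix A assume A: "A \<in> sets \<mu>"
    then have Ab: "A \<in> sets borel" using sm by simp
    have "emeasure (distr ?B borel ?T) A = emeasure ?B (?T -` A \<inter> space ?B)"
      by (rule emeasure_distr[OF Tm Ab])
    also have "\<dots> = (\<integral>\<^sup>+b. emeasure \<mu> (Pair b -` (?T -` A \<inter> space ?B)) \<partial>bernoulli_pmf p)"
      by (rule emeasure_pair_measure_alt) (rule measurable_sets[OF Tm Ab])
    also have "\<dots> = (\<integral>\<^sup>+b. emeasure \<mu> ((\<lambda>x. c * x + (if b then t1 else t2)) -` A) \<partial>bernoulli_pmf p)"
      by (intro nn_integral_cong arg_cong[where f="emeasure \<mu>"]) (auto simp: space_pair_measure sb(3))
    also have "\<dots> = ennreal p * emeasure \<mu> ((\<lambda>x. c * x + t1) -` A) +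
        ennreal (1 - p) * emeasure \<mu> ((\<lambda>x. c * x + t2) -` A)"
      using p by (simp add: mult.commute)
    also have "\<dots> = emeasure \<mu> A"
      using ss Ab unfolding is_ss_measure_def by simp
    finally show "emeasure \<mu> A = emeasure (distr ?B borel ?T) A" by simp
  qed
qed

lemma ss_char:
  assumes ss: "is_ss_measure c t1 t2 p \<mu>" and p: "0 \<le> p" "p \<le> 1"
  shows "char \<mu> t = (of_real p * iexp (t * t1) + of_real (1 - p) * iexp (t * t2)) * char \<mu> (c * t)"
proof -
  let ?B = "measure_pmf (bernoulli_pmf p)"
  let ?T = "\<lambda>z. c * snd z + (if fst z then t1 else t2)"
  note sb = ss_basic[OF ss]
  interpret prob_space \<mu> by (rule sb(2))
  interpret P: pair_prob_space ?B \<mu> ..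
  have sm[measurable_cong]: "sets \<mu> = sets borel" by (rule sb(1))
  have Tm: "?T \<in> measurable (?B \<Otimes>\<^sub>M \<mu>) borel"
  proof -
    have f: "(\<lambda>z. fst z) \<in> measurable (?B \<Otimes>\<^sub>M \<mu>) (measure_pmf (bernoulli_pmf p))" by simp
    have "(\<lambda>z. (if fst z then t1 else t2)) \<in> borel_measurable (?B \<Otimes>\<^sub>M \<mu>)"
      by (rule measurable_compose[OF f]) simp
    moreover have "(\<lambda>z. snd z) \<in> borel_measurable (?B \<Otimes>\<^sub>M \<mu>)"
      by (rule measurable_compose[OF measurable_snd]) (simp add: measurable_cong_sets[OF refl sm])
    ultimately show ?thesis by measurable
  qed
  have "char \<mu> t = char (distr (?B \<Otimes>\<^sub>M \<mu>) borel ?T) t"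
    using ss_repr[OF ss p] by (rule arg_cong)
  also have "\<dots> = (\<integral>z. iexp (t * ?T z) \<partial>(?B \<Otimes>\<^sub>M \<mu>))"
    unfolding char_def by (rule integral_distr[OF Tm]) (intro borel_measurable_continuous_onI continuous_intros)
  also have "\<dots> = (\<integral>b. \<integral>x. iexp (t * ?T (b, x)) \<partial>\<mu> \<partial>?B)"
  proof (rule P.integral_fst'[symmetric])
    show "integrable (?B \<Otimes>\<^sub>M \<mu>) (\<lambda>z. iexp (t * ?T z))"
    proof (rule P.integrable_const_bound[where B=1])
      show "AE z in ?B \<Otimes>\<^sub>M \<mu>. norm (iexp (t * ?T z)) \<le> 1" by simp
      have "(\<lambda>z. complex_of_real (t * ?T z)) \<in> borel_measurable (?B \<Otimes>\<^sub>M \<mu>)"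
        using Tm by measurable
      then show "(\<lambda>z. iexp (t * ?T z)) \<in> borel_measurable (?B \<Otimes>\<^sub>M \<mu>)"
        by measurable
    qed
  qed
  also have "\<dots> = (\<Sum>b\<in>UNIV. pmf (bernoulli_pmf p) b *\<^sub>R (\<integral>x. iexp (t * ?T (b, x)) \<partial>\<mu>))"
    by (rule integral_measure_pmf) auto
  also have "\<dots> = p *\<^sub>R (\<integral>x. iexp (t * (c * x + t1)) \<partial>\<mu>) + (1 - p) *\<^sub>R (\<integral>x. iexp (t * (c * x + t2)) \<partial>\<mu>)"
    using p by (simp add: UNIV_bool)
  also have "(\<lambda>x. iexp (t * (c * x + t1))) = (\<lambda>x. iexp (t * t1) * iexp (c * t * x))"
    by (auto simp: algebra_simps exp_add[symmetric])
  also have "(\<lambda>x. iexp (t * (c * x + t2))) = (\<lambda>x. iexp (t * t2) * iexp (c * t * x))"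
    by (auto simp: algebra_simps exp_add[symmetric])
  finally show ?thesis
    by (simp add: char_def scaleR_conv_of_real algebra_simps)
qed

lemma ss_real_distribution: "is_ss_measure c t1 t2 p \<mu> \<Longrightarrow> real_distribution \<mu>"
  using ss_basic[of c t1 t2 p \<mu>]
  unfolding real_distribution_def real_distribution_axioms_def by auto

lemma ss_unique:
  assumes s1: "is_ss_measure c t1 t2 p \<mu>" and s2: "is_ss_measure c t1 t2 p \<nu>"
    and c: "0 < c" "c < 1" and p: "0 \<le> p" "p \<le> 1"
  shows "\<mu> = \<nu>"
proof -
  interpret M: real_distribution \<mu> by (rule ss_real_distribution[OF s1])
  interpret N: real_distribution \<nu> by (rule ss_real_distribution[OF s2])
  define d where "d t = char \<mu> t - char \<nu> t" for t
  define A where "A t = of_real p * iexp (t * t1) + of_real (1 - p) * iexp (t * t2)" for t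
  have dA: "d t = A t * d (c * t)" for t
    unfolding d_def A_def ss_char[OF s1 p, of t] ss_char[OF s2 p, of t] by (simp add: algebra_simps)
  have An: "norm (A t) \<le> 1" for t
  proof -
    have "norm (A t) \<le> norm (of_real p * iexp (t * t1)) + norm (of_real (1 - p) * iexp (t * t2))"
      unfolding A_def by (rule norm_triangle_ineq)
    also have "\<dots> = p + (1 - p)" using p by (simp add: norm_mult del: of_real_diff)
    finally show ?thesis by simp
  qed
  have dn: "norm (d t) \<le> norm (d (c * t))" for t
  proof -
    have "norm (d t) = norm (A t) * norm (d (c * t))" by (simp add: dA[of t] norm_mult)
    also have "\<dots> \<le> 1 * norm (d (c * t))" by (rule mult_right_mono[OF An]) simp
    finally show ?thesis by simp
  qed
  have dpow: "norm (d t) \<le> norm (d (c ^ n * t))" for n t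
  proof (induction n arbitrary: t)
    case 0 then show ?case by simp
  next
    case (Suc n)
    have "norm (d t) \<le> norm (d (c * t))" by (rule dn)
    also have "\<dots> \<le> norm (d (c ^ n * (c * t)))" by (rule Suc)
    finally show ?case by (simp add: mult.assoc mult.commute mult.left_commute)
  qed
  have "char \<mu> t = char \<nu> t" for t
  proof -
    have cont: "isCont d 0" unfolding d_def[abs_def]
      by (intro continuous_intros M.isCont_char N.isCont_char)
    have lim0: "(\<lambda>n. c ^ n * t) \<longlonglongrightarrow> 0"
      using tendsto_mult_right_zero[OF LIMSEQ_power_zero[of c], of t] c by (simp add: mult.commute)
    have "(\<lambda>n. d (c ^ n * t)) \<longlonglongrightarrow> d 0"
      by (rule isCont_tendsto_compose[OF cont lim0])
    moreover have "d 0 = 0" unfolding d_def by (simp add: M.char_zero N.char_zero)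
    ultimately have "(\<lambda>n. norm (d (c ^ n * t))) \<longlonglongrightarrow> 0"
      using tendsto_norm by fastforce
    then have "norm (d t) \<le> 0"
      by (rule LIMSEQ_le_const) (use dpow in auto)
    then show ?thesis unfolding d_def by simp
  qed
  then show ?thesis
    by (intro Levy_uniqueness ss_real_distribution[OF s1] ss_real_distribution[OF s2]) auto
qed

lemma ss_measure_eq:
  assumes "is_ss_measure c t1 t2 p \<mu>" "0 < c" "c < 1" "0 \<le> p" "p \<le> 1"
  shows "ss_measure c t1 t2 p = \<mu>"
  unfolding ss_measure_def
  by (rule the_equality[where P="is_ss_measure c t1 t2 p", OF assms(1)]) (use ss_unique assms in blast)

lemma space_stream_pmf[simp]: "space (stream_space (measure_pmf P)) = UNIV"
  by (simp add: space_stream_space)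

lemma stream_split:
  "stream_space (measure_pmf P) =
     distr (measure_pmf P \<Otimes>\<^sub>M stream_space (measure_pmf P)) (stream_space (measure_pmf P)) (\<lambda>z. fst z ## snd z)"
  (is "?S = distr (?P \<Otimes>\<^sub>M ?S) ?S ?F")
proof -
  interpret S: prob_space ?S by (rule prob_space.prob_space_stream_space[OF prob_space_measure_pmf])
  interpret PS: pair_prob_space ?P ?S ..
  have Fm: "?F \<in> measurable (?P \<Otimes>\<^sub>M ?S) ?S" by measurable
  show ?thesis
  proof (rule measure_eqI)
    fix A assume A: "A \<in> sets ?S"
    have "emeasure (distr (?P \<Otimes>\<^sub>M ?S) ?S ?F) A = emeasure (?P \<Otimes>\<^sub>M ?S) (?F -` A \<inter> space (?P \<Otimes>\<^sub>M ?S))"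
      by (rule emeasure_distr[OF Fm A])
    also have "\<dots> = (\<integral>\<^sup>+x. emeasure ?S (Pair x -` (?F -` A \<inter> space (?P \<Otimes>\<^sub>M ?S))) \<partial>?P)"
      by (rule S.emeasure_pair_measure_alt) (rule measurable_sets[OF Fm A])
    also have "\<dots> = (\<integral>\<^sup>+x. emeasure ?S {\<omega> \<in> space ?S. x ## \<omega> \<in> A} \<partial>?P)"
      by (intro nn_integral_cong arg_cong[where f="emeasure ?S"]) (auto simp: space_pair_measure)
    also have "\<dots> = emeasure ?S A"
      by (rule prob_space.emeasure_stream_space[OF prob_space_measure_pmf, symmetric]) (rule A)
    finally show "emeasure ?S A = emeasure (distr (?P \<Otimes>\<^sub>M ?S) ?S ?F) A" by simp
  qed simp
qed

lemma stream_integral_split: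
  fixes F :: "'a stream \<Rightarrow> real"
  assumes Fm: "F \<in> borel_measurable (stream_space (measure_pmf P))" and K: "\<And>\<omega>. \<bar>F \<omega>\<bar> \<le> K"
  shows "(\<integral>\<omega>. F \<omega> \<partial>stream_space (measure_pmf P)) =
         (\<integral>x. (\<integral>\<omega>. F (x ## \<omega>) \<partial>stream_space (measure_pmf P)) \<partial>measure_pmf P)"
  (is "?L = ?R")
proof -
  let ?S = "stream_space (measure_pmf P)" and ?P = "measure_pmf P"
  let ?F = "\<lambda>z. fst z ## snd z"
  interpret S: prob_space ?S by (rule prob_space.prob_space_stream_space[OF prob_space_measure_pmf])
  interpret PS: pair_prob_space ?P ?S ..
  have Fm': "?F \<in> measurable (?P \<Otimes>\<^sub>M ?S) ?S" by measurable
  have "?L = (\<integral>\<omega>. F \<omega> \<partial>distr (?P \<Otimes>\<^sub>M ?S) ?S ?F)"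
    using stream_split[of P] by (rule arg_cong)
  also have "\<dots> = (\<integral>z. F (?F z) \<partial>(?P \<Otimes>\<^sub>M ?S))"
    by (rule integral_distr[OF Fm' Fm])
  also have "\<dots> = ?R"
  proof -
    have "integrable (?P \<Otimes>\<^sub>M ?S) (\<lambda>z. F (?F z))"
      by (rule PS.integrable_const_bound[where B=K]) (use K Fm Fm' in auto)
    from PS.integral_fst'[OF this] show ?thesis by simp
  qed
  finally show ?thesis .
qed

lemma ser_emeasure_split:
  assumes c: "0 \<le> c" "c < 1" and B: "\<And>x. \<bar>g x\<bar> \<le> B" and A: "A \<in> sets borel"
  shows "emeasure (distr (stream_space (measure_pmf P)) borel (ser c g)) A =
    (\<integral>\<^sup>+x. emeasure (distr (stream_space (measure_pmf P)) borel (ser c g)) ((\<lambda>y. c * y + g x) -` A) \<partial>measure_pmf P)"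
proof -
  let ?S = "stream_space (measure_pmf P)"
  have "emeasure (distr ?S borel (ser c g)) A = emeasure ?S (ser c g -` A \<inter> space ?S)"
    by (rule emeasure_distr[OF ser_measurable A])
  also have "\<dots> = (\<integral>\<^sup>+t. emeasure ?S {x\<in>space ?S. t ## x \<in> ser c g -` A \<inter> space ?S} \<partial>measure_pmf P)"
    by (rule prob_space.emeasure_stream_space[OF prob_space_measure_pmf]) (rule measurable_sets[OF ser_measurable A])
  also have "\<dots> = (\<integral>\<^sup>+t. emeasure ?S (((\<lambda>y. c * y + g t) \<circ> ser c g) -` A \<inter> space ?S) \<partial>measure_pmf P)"
    by (intro nn_integral_cong arg_cong[where f="emeasure ?S"]) (auto simp: ser_Stream[OF c B])
  also have "\<dots> = (\<integral>\<^sup>+x. emeasure (distr ?S borel (ser c g)) ((\<lambda>y. c * y + g x) -` A) \<partial>measure_pmf P)"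
  proof (intro nn_integral_cong)
    fix x
    have m: "(\<lambda>y. c * y + g x) -` A \<in> sets borel"
      using measurable_sets[OF _ A, of "\<lambda>y. c * y + g x" borel] by simp
    show "emeasure ?S (((\<lambda>y. c * y + g x) \<circ> ser c g) -` A \<inter> space ?S) =
        emeasure (distr ?S borel (ser c g)) ((\<lambda>y. c * y + g x) -` A)"
      by (subst emeasure_distr[OF ser_measurable m]) (simp add: vimage_comp)
  qed
  finally show ?thesis .
qed

lemma ser_moments:
  fixes h :: "'a \<Rightarrow> real"
  assumes c: "0 \<le> c" "c < 1" and B: "\<And>x. \<bar>h x\<bar> \<le> B" and fin: "finite (set_pmf P)"
  defines "E1 \<equiv> (\<integral>\<omega>. ser c h \<omega> \<partial>stream_space (measure_pmf P))"
  defines "E2 \<equiv> (\<integral>\<omega>. (ser c h \<omega>)^2 \<partial>stream_space (measure_pmf P))"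
  shows "(1 - c) * E1 = (\<integral>x. h x \<partial>measure_pmf P)"
    and "(1 - c^2) * E2 = 2 * c * E1 * (\<integral>x. h x \<partial>measure_pmf P) + (\<integral>x. (h x)^2 \<partial>measure_pmf P)"
proof -
  let ?S = "stream_space (measure_pmf P)"
  interpret S: prob_space ?S by (rule prob_space.prob_space_stream_space[OF prob_space_measure_pmf])
  have Bn: "0 \<le> B" using B[of undefined] by simp
  have Yb: "\<bar>ser c h \<omega>\<bar> \<le> B / (1 - c)" for \<omega>
    proof -
    have l: "\<And>x. - B \<le> h x" "\<And>x. h x \<le> B" using B by (smt (verit))+
    show ?thesis using ser_bounds[where \<omega>=\<omega> and g=h, OF c l] by (auto simp: abs_le_iff)
  qed
  have Yb2: "\<bar>(ser c h \<omega>)^2\<bar> \<le> (B / (1 - c))^2" for \<omega>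
  proof -
    have "(ser c h \<omega>)^2 = \<bar>ser c h \<omega>\<bar>^2" by simp
    also have "\<dots> \<le> (B / (1 - c))^2" by (rule power_mono[OF Yb]) simp
    finally show ?thesis by simp
  qed
  have iY: "integrable ?S (ser c h)"
    by (rule S.integrable_const_bound[where B="B / (1 - c)"]) (use Yb in auto)
  have iY2: "integrable ?S (\<lambda>\<omega>. (ser c h \<omega>)^2)"
    by (rule S.integrable_const_bound[where B="(B / (1 - c))^2"]) (use Yb2 in auto)
  have pU: "S.prob UNIV = 1" using S.prob_space by simp
  have ih: "integrable (measure_pmf P) f" for f :: "'a \<Rightarrow> real"
    by (rule integrable_measure_pmf_finite[OF fin])
  have "E1 = (\<integral>x. (\<integral>\<omega>. ser c h (x ## \<omega>) \<partial>?S) \<partial>measure_pmf P)"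
    unfolding E1_def by (rule stream_integral_split[OF ser_measurable Yb])
  also have "\<dots> = (\<integral>x. c * E1 + h x \<partial>measure_pmf P)"
  proof (rule Bochner_Integration.integral_cong[OF refl])
    fix x
    have "(\<integral>\<omega>. ser c h (x ## \<omega>) \<partial>?S) = (\<integral>\<omega>. c * ser c h \<omega> + h x \<partial>?S)"
      by (intro Bochner_Integration.integral_cong refl) (auto simp: ser_Stream[OF c B])
    also have "\<dots> = c * E1 + h x" using iY pU by (simp add: E1_def)
    finally show "(\<integral>\<omega>. ser c h (x ## \<omega>) \<partial>?S) = c * E1 + h x" .
  qed
  also have "\<dots> = c * E1 + (\<integral>x. h x \<partial>measure_pmf P)"
    by (simp add: ih)
  finally show "(1 - c) * E1 = (\<integral>x. h x \<partial>measure_pmf P)" by (simp add: algebra_simps)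
  have "E2 = (\<integral>x. (\<integral>\<omega>. (ser c h (x ## \<omega>))^2 \<partial>?S) \<partial>measure_pmf P)"
    unfolding E2_def by (rule stream_integral_split[OF _ Yb2]) measurable
  also have "\<dots> = (\<integral>x. c^2 * E2 + 2 * c * h x * E1 + (h x)^2 \<partial>measure_pmf P)"
  proof (rule Bochner_Integration.integral_cong[OF refl])
    fix x
    have "(\<integral>\<omega>. (ser c h (x ## \<omega>))^2 \<partial>?S) = (\<integral>\<omega>. c^2 * (ser c h \<omega>)^2 + 2 * c * h x * ser c h \<omega> + (h x)^2 \<partial>?S)"
      by (intro Bochner_Integration.integral_cong refl) (auto simp: ser_Stream[OF c B] power2_eq_square algebra_simps)
    also have "\<dots> = c^2 * E2 + 2 * c * h x * E1 + (h x)^2"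
      using iY iY2 pU by (simp add: E1_def E2_def)
    finally show "(\<integral>\<omega>. (ser c h (x ## \<omega>))^2 \<partial>?S) = c^2 * E2 + 2 * c * h x * E1 + (h x)^2" .
  qed
  also have "\<dots> = c^2 * E2 + 2 * c * E1 * (\<integral>x. h x \<partial>measure_pmf P) + (\<integral>x. (h x)^2 \<partial>measure_pmf P)"
    by (simp add: ih algebra_simps)
  finally show "(1 - c^2) * E2 = 2 * c * E1 * (\<integral>x. h x \<partial>measure_pmf P) + (\<integral>x. (h x)^2 \<partial>measure_pmf P)"
    by (simp add: algebra_simps)
qed

lemma ser_unit:
  assumes c: "0 < c" "c < 1" and g: "\<And>x. 0 \<le> g x" "\<And>x. g x \<le> 1 - c"
  shows "0 \<le> ser c g \<omega>" "ser c g \<omega> \<le> 1"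
  using ser_bounds[where c=c and \<omega>=\<omega> and g=g and a=0 and b="1-c", OF _ _ g] c by auto

lemma ss_of_stream:
  fixes P :: "'a pmf"
  assumes c: "0 < c" "c < 1" and g: "\<And>x. 0 \<le> g x" "\<And>x. g x \<le> 1 - c"
    and w: "\<And>f :: real \<Rightarrow> ennreal. (\<integral>\<^sup>+x. f (g x) \<partial>measure_pmf P) = ennreal p * f t1 + ennreal (1 - p) * f t2"
  shows "is_ss_measure c t1 t2 p (distr (stream_space (measure_pmf P)) borel (ser c g))"
proof -
  let ?S = "stream_space (measure_pmf P)"
  let ?\<mu> = "distr ?S borel (ser c g)"
  interpret S: prob_space ?S by (rule prob_space.prob_space_stream_space[OF prob_space_measure_pmf])
  have B: "\<bar>g x\<bar> \<le> 1" for x using g[of x] c by auto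
  have ps: "prob_space ?\<mu>" by (rule S.prob_space_distr) simp
  have "emeasure ?\<mu> {0..1} = emeasure ?S (ser c g -` {0..1} \<inter> space ?S)"
    by (rule emeasure_distr) auto
  also have "ser c g -` {0..1} \<inter> space ?S = space ?S"
    using ser_unit[OF c g] by auto
  also have "emeasure ?S (space ?S) = 1" by (rule S.emeasure_space_1)
  finally have e1: "emeasure ?\<mu> {0..1} = 1" .
  show ?thesis unfolding is_ss_measure_def prob_on_unit_def
  proof (intro conjI ballI ps e1)
    show "sets ?\<mu> = sets borel" by simp
    fix A :: "real set" assume A: "A \<in> sets borel"
    show "emeasure ?\<mu> A = ennreal p * emeasure ?\<mu> ((\<lambda>x. c * x + t1) -` A) +
        ennreal (1 - p) * emeasure ?\<mu> ((\<lambda>x. c * x + t2) -` A)"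
    proof -
      have "emeasure ?\<mu> A = (\<integral>\<^sup>+x. emeasure ?\<mu> ((\<lambda>y. c * y + g x) -` A) \<partial>measure_pmf P)"
        by (rule ser_emeasure_split[OF _ _ B A]) (use c in auto)
      also have "\<dots> = ennreal p * emeasure ?\<mu> ((\<lambda>x. c * x + t1) -` A) +
        ennreal (1 - p) * emeasure ?\<mu> ((\<lambda>x. c * x + t2) -` A)"
        by (rule w[of "\<lambda>y. emeasure ?\<mu> ((\<lambda>z. c * z + y) -` A)"])
      finally show ?thesis .
    qed
  qed
qed

definition tau :: "real \<Rightarrow> real \<Rightarrow> bool \<Rightarrow> real" where
  "tau t1 t2 b = (if b then t1 else t2)"

lemma ss_bernoulli:
  assumes c: "0 < c" "c < 1" and t: "0 \<le> t1" "t1 \<le> 1 - c" "0 \<le> t2" "t2 \<le> 1 - c"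
    and p: "0 \<le> p" "p \<le> 1"
  shows "is_ss_measure c t1 t2 p (distr (stream_space (measure_pmf (bernoulli_pmf p))) borel (ser c (tau t1 t2)))"
  by (rule ss_of_stream[OF c]) (use t p in \<open>auto simp: tau_def mult.commute\<close>)

lemma ss_measure_bernoulli:
  assumes c: "0 < c" "c < 1" and t: "0 \<le> t1" "t1 \<le> 1 - c" "0 \<le> t2" "t2 \<le> 1 - c"
    and p: "0 \<le> p" "p \<le> 1"
  shows "ss_measure c t1 t2 p = distr (stream_space (measure_pmf (bernoulli_pmf p))) borel (ser c (tau t1 t2))"
  by (rule ss_measure_eq[OF ss_bernoulli[OF assms] c p])

lemma pair_weights:
  fixes f :: "real \<Rightarrow> ennreal"
  assumes a: "0 \<le> a" "a \<le> 1" and r: "0 \<le> r" "r \<le> 1"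
  shows "(\<integral>\<^sup>+z. f (tau t1 t2 (fst z \<or> (snd z \<and> d))) \<partial>measure_pmf (pair_pmf (bernoulli_pmf a) (bernoulli_pmf r)))
     = ennreal (if d then a + (1 - a) * r else a) * f t1 + ennreal (1 - (if d then a + (1 - a) * r else a)) * f t2"
proof -
  have "(\<integral>\<^sup>+z. f (tau t1 t2 (fst z \<or> (snd z \<and> d))) \<partial>measure_pmf (pair_pmf (bernoulli_pmf a) (bernoulli_pmf r)))
      = (\<integral>\<^sup>+b1. \<integral>\<^sup>+b2. f (tau t1 t2 (b1 \<or> (b2 \<and> d))) \<partial>bernoulli_pmf r \<partial>bernoulli_pmf a)"
    by (subst nn_integral_pair_pmf') simp
  also have "\<dots> = (\<integral>\<^sup>+b2. f (tau t1 t2 (True \<or> (b2 \<and> d))) \<partial>bernoulli_pmf r) * ennreal a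
      + (\<integral>\<^sup>+b2. f (tau t1 t2 (False \<or> (b2 \<and> d))) \<partial>bernoulli_pmf r) * ennreal (1 - a)"
    by (rule nn_integral_bernoulli_pmf) (use a in auto)
  also have "(\<integral>\<^sup>+b2. f (tau t1 t2 (True \<or> (b2 \<and> d))) \<partial>bernoulli_pmf r) = f t1"
    by (simp add: tau_def measure_pmf.emeasure_space_1)
  also have "(\<integral>\<^sup>+b2. f (tau t1 t2 (False \<or> (b2 \<and> d))) \<partial>bernoulli_pmf r) =
      (if d then f t1 * ennreal r + f t2 * ennreal (1 - r) else f t2)"
  proof (cases d)
    case True
    then show ?thesis by (subst nn_integral_bernoulli_pmf) (use r in \<open>auto simp: tau_def\<close>)
  next
    case False
    then show ?thesis by (simp add: tau_def measure_pmf.emeasure_space_1)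
  qed
  finally have L: "(\<integral>\<^sup>+z. f (tau t1 t2 (fst z \<or> (snd z \<and> d))) \<partial>measure_pmf (pair_pmf (bernoulli_pmf a) (bernoulli_pmf r)))
     = f t1 * ennreal a + (if d then f t1 * ennreal r + f t2 * ennreal (1 - r) else f t2) * ennreal (1 - a)" .
  show ?thesis
  proof (cases d)
    case True
    have e1: "ennreal (a + (1 - a) * r) = ennreal a + ennreal (1 - a) * ennreal r"
      using a r by (simp only: ennreal_plus[symmetric] ennreal_mult[symmetric]) (auto intro!: ennreal_cong)
    have e2: "ennreal (1 - (a + (1 - a) * r)) = ennreal (1 - a) * ennreal (1 - r)"
      using a r by (subst ennreal_mult[symmetric]) (auto intro!: arg_cong[where f=ennreal] simp: algebra_simps)
    show ?thesis unfolding L using True e1 e2 by (simp add: distrib_left distrib_right mult.commute mult.left_commute)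
  next
    case False
    then show ?thesis unfolding L by (simp add: mult.commute)
  qed
qed

lemma UNIV_bool_pair: "(UNIV :: (bool \<times> bool) set) = {(True, True), (True, False), (False, True), (False, False)}"
  by auto

lemma sum_UNIV_bool_pair: "(\<Sum>z\<in>(UNIV :: (bool \<times> bool) set). F z) = F (True, True) + F (True, False) + F (False, True) + F (False, False)"
  unfolding UNIV_bool_pair by (simp add: add.assoc)

lemma pair_integral:
  fixes F :: "bool \<times> bool \<Rightarrow> real"
  assumes a: "0 \<le> a" "a \<le> 1" and r: "0 \<le> r" "r \<le> 1"
  shows "(\<integral>z. F z \<partial>measure_pmf (pair_pmf (bernoulli_pmf a) (bernoulli_pmf r))) =
    F (True, True) * (a * r) + F (True, False) * (a * (1 - r)) + F (False, True) * ((1 - a) * r) + F (False, False) * ((1 - a) * (1 - r))"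
  apply (subst integral_measure_pmf_real[where A=UNIV])
    apply simp
   apply simp
  apply (subst sum_UNIV_bool_pair)
  using a r by (simp add: pmf_pair)

definition clip :: "real \<Rightarrow> real" where "clip x = max 0 (min 1 x)"

lemma clip_measurable[measurable]: "clip \<in> borel_measurable borel"
  unfolding clip_def by measurable

lemma clip_bounds: "0 \<le> clip x" "clip x \<le> 1" unfolding clip_def by auto

lemma clip_id: "0 \<le> x \<Longrightarrow> x \<le> 1 \<Longrightarrow> clip x = x" unfolding clip_def by auto

lemma jensen_sq:
  fixes f :: "'a \<Rightarrow> real"
  assumes "prob_space M" "integrable M f" "integrable M (\<lambda>x. (f x)^2)"
  shows "(\<integral>x. f x \<partial>M)^2 \<le> (\<integral>x. (f x)^2 \<partial>M)"
proof -
  interpret prob_space M by fact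
  define m where "m = (\<integral>x. f x \<partial>M)"
  have "0 \<le> (\<integral>x. (f x - m)^2 \<partial>M)" by (rule integral_nonneg_AE) auto
  also have "(\<integral>x. (f x - m)^2 \<partial>M) = (\<integral>x. (f x)^2 - 2 * m * f x + m^2 \<partial>M)"
    by (simp add: power2_eq_square algebra_simps)
  also have "\<dots> = (\<integral>x. (f x)^2 \<partial>M) - 2 * m * m + m^2"
    using assms(2,3) by (simp add: m_def prob_space)
  finally show ?thesis by (simp add: m_def power2_eq_square)
qed

lemma ss_mean:
  assumes c: "0 < c" "c < 1" and t: "0 \<le> t1" "t1 \<le> 1 - c" "0 \<le> t2" "t2 \<le> 1 - c"
    and p: "0 \<le> p" "p \<le> 1"
  shows "(\<integral>x. clip x \<partial>ss_measure c t1 t2 p) = (p * t1 + (1 - p) * t2) / (1 - c)"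
proof -
  let ?S = "stream_space (measure_pmf (bernoulli_pmf p))"
  have g: "\<And>x. 0 \<le> tau t1 t2 x" "\<And>x. tau t1 t2 x \<le> 1 - c" using t by (auto simp: tau_def)
  have B: "\<bar>tau t1 t2 x\<bar> \<le> 1" for x using g[of x] c by auto
  have "(\<integral>x. clip x \<partial>ss_measure c t1 t2 p) = (\<integral>x. clip x \<partial>distr ?S borel (ser c (tau t1 t2)))"
    by (simp add: ss_measure_bernoulli[OF c t p])
  also have "\<dots> = (\<integral>\<omega>. clip (ser c (tau t1 t2) \<omega>) \<partial>?S)"
    by (rule integral_distr) auto
  also have "\<dots> = (\<integral>\<omega>. ser c (tau t1 t2) \<omega> \<partial>?S)"
    by (intro Bochner_Integration.integral_cong refl clip_id ser_unit[OF c g])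
  also have "\<dots> = (\<integral>x. tau t1 t2 x \<partial>measure_pmf (bernoulli_pmf p)) / (1 - c)"
    using ser_moments(1)[of c "tau t1 t2" 1 "bernoulli_pmf p"] c B by (simp add: field_simps)
  also have "(\<integral>x. tau t1 t2 x \<partial>measure_pmf (bernoulli_pmf p)) = p * t1 + (1 - p) * t2"
    using p by (simp add: tau_def mult.commute)
  finally show ?thesis .
qed

lemma coupling_lower:
  assumes g: "\<gamma> \<in> couplings \<mu> \<nu>"
  shows "ennreal (((\<integral>x. clip x \<partial>\<mu>) - (\<integral>x. clip x \<partial>\<nu>))^2)
     \<le> (\<integral>\<^sup>+z. ennreal (\<bar>fst z - snd z\<bar> powr 2) \<partial>\<gamma>)"
proof -
  have sg[measurable_cong]: "sets \<gamma> = sets (borel \<Otimes>\<^sub>M borel)" and ps: "prob_space \<gamma>"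
    and e1: "emeasure \<gamma> ({0..1} \<times> {0..1}) = 1"
    and d1: "distr \<gamma> borel fst = \<mu>" and d2: "distr \<gamma> borel snd = \<nu>"
    using g unfolding couplings_def by auto
  interpret prob_space \<gamma> by (rule ps)
  have fm: "fst \<in> borel_measurable \<gamma>" by (simp add: measurable_cong_sets[OF sg refl])
  have sm: "snd \<in> borel_measurable \<gamma>" by (simp add: measurable_cong_sets[OF sg refl])
  let ?f = "\<lambda>z. clip (fst z) - clip (snd z)"
  have fmeas: "?f \<in> borel_measurable \<gamma>" using fm sm by measurable
  have fb: "\<bar>?f z\<bar> \<le> 1" for z using clip_bounds[of "fst z"] clip_bounds[of "snd z"] by auto
  have fb2: "\<bar>(?f z)^2\<bar> \<le> 1" for z
  proof -
    have "(?f z)^2 = \<bar>?f z\<bar>^2" by simp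
    also have "\<dots> \<le> 1^2" by (rule power_mono[OF fb]) simp
    finally show ?thesis by simp
  qed
  have i1: "integrable \<gamma> ?f" by (rule integrable_const_bound[where B=1]) (use fb fmeas in auto)
  have i2: "integrable \<gamma> (\<lambda>z. (?f z)^2)" by (rule integrable_const_bound[where B=1]) (use fb2 fmeas in auto)
  have ic1: "integrable \<gamma> (\<lambda>z. clip (fst z))"
    by (rule integrable_const_bound[where B=1]) (use clip_bounds fm in auto)
  have ic2: "integrable \<gamma> (\<lambda>z. clip (snd z))"
    by (rule integrable_const_bound[where B=1]) (use clip_bounds sm in auto)
  have m1: "(\<integral>x. clip x \<partial>\<mu>) = (\<integral>z. clip (fst z) \<partial>\<gamma>)"
    unfolding d1[symmetric] by (rule integral_distr[OF fm]) simp
  have m2: "(\<integral>x. clip x \<partial>\<nu>) = (\<integral>z. clip (snd z) \<partial>\<gamma>)"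
    unfolding d2[symmetric] by (rule integral_distr[OF sm]) simp
  have box: "{0..1} \<times> {0..1} \<in> sets \<gamma>" unfolding sg by auto
  have "prob ({0..1} \<times> {0..1}) = 1" using e1 emeasure_eq_measure by simp
  then have AEbox: "AE z in \<gamma>. z \<in> {0..1::real} \<times> {0..1::real}"
    using AE_in_set_eq_1[OF box] by simp
  have "ennreal (((\<integral>x. clip x \<partial>\<mu>) - (\<integral>x. clip x \<partial>\<nu>))^2) = ennreal ((\<integral>z. ?f z \<partial>\<gamma>)^2)"
    unfolding m1 m2 using ic1 ic2 by simp
  also have "\<dots> \<le> ennreal (\<integral>z. (?f z)^2 \<partial>\<gamma>)"
    by (rule ennreal_leI, rule jensen_sq[OF ps i1 i2])
  also have "\<dots> = (\<integral>\<^sup>+z. ennreal ((?f z)^2) \<partial>\<gamma>)"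
    by (rule nn_integral_eq_integral[symmetric, OF i2]) simp
  also have "\<dots> = (\<integral>\<^sup>+z. ennreal (\<bar>fst z - snd z\<bar> powr 2) \<partial>\<gamma>)"
  proof (rule nn_integral_cong_AE)
    show "AE z in \<gamma>. ennreal ((?f z)^2) = ennreal (\<bar>fst z - snd z\<bar> powr 2)"
      using AEbox by eventually_elim (auto simp: clip_id)
  qed
  finally show ?thesis .
qed

lemma coupling_upper:
  assumes c: "0 < c" "c < 1" and t: "0 \<le> t1" "t1 \<le> 1 - c" "0 \<le> t2" "t2 \<le> 1 - c"
    and p: "0 < p" "p < 1" and q: "0 < q" "q < 1" and pq: "p \<noteq> q"
  shows "\<exists>\<gamma>\<in>couplings (ss_measure c t1 t2 p) (ss_measure c t1 t2 q).
    (\<integral>\<^sup>+z. ennreal (\<bar>fst z - snd z\<bar> powr 2) \<partial>\<gamma>) =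
      ennreal (((t2 - t1) / (1 - c))^2 * ((2 * c * (p - q)^2 + (1 - c) * \<bar>p - q\<bar>) / (1 + c)))"
proof -
  define lo where "lo = min p q"
  define r where "r = \<bar>p - q\<bar> / (1 - lo)"
  have lo: "0 \<le> lo" "lo \<le> 1" "lo < 1" unfolding lo_def using p q by auto
  have r: "0 \<le> r" "r \<le> 1" unfolding r_def lo_def using p q by (auto simp: field_simps)
  have lor: "(1 - lo) * r = \<bar>p - q\<bar>" unfolding r_def using lo by simp
  define Q where "Q = pair_pmf (bernoulli_pmf lo) (bernoulli_pmf r)"
  define g1 where "g1 = (\<lambda>z. tau t1 t2 (fst z \<or> (snd z \<and> q < p)))"
  define g2 where "g2 = (\<lambda>z. tau t1 t2 (fst z \<or> (snd z \<and> p < q)))"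
  define h where "h = (\<lambda>z. g1 z - g2 z)"
  let ?S = "stream_space (measure_pmf Q)"
  interpret S: prob_space ?S by (rule prob_space.prob_space_stream_space[OF prob_space_measure_pmf])
  have gb1: "\<And>x. 0 \<le> g1 x" "\<And>x. g1 x \<le> 1 - c" using t by (auto simp: g1_def tau_def)
  have gb2: "\<And>x. 0 \<le> g2 x" "\<And>x. g2 x \<le> 1 - c" using t by (auto simp: g2_def tau_def)
  have B1: "\<bar>g1 x\<bar> \<le> 1" for x using gb1[of x] c by auto
  have B2: "\<bar>g2 x\<bar> \<le> 1" for x using gb2[of x] c by auto
  have Bh: "\<bar>h x\<bar> \<le> 1" for x using gb1[of x] gb2[of x] c by (auto simp: h_def)
  have w1: "(if q < p then lo + (1 - lo) * r else lo) = p"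
    using lor pq unfolding lo_def by auto
  have w2: "(if p < q then lo + (1 - lo) * r else lo) = q"
    using lor pq unfolding lo_def by auto
  have ss1: "is_ss_measure c t1 t2 p (distr ?S borel (ser c g1))"
    by (rule ss_of_stream[OF c gb1]) (use pair_weights[OF lo(1,2) r, of _ t1 t2 "q < p"] in \<open>simp add: g1_def Q_def w1\<close>)
  have ss2: "is_ss_measure c t1 t2 q (distr ?S borel (ser c g2))"
    by (rule ss_of_stream[OF c gb2]) (use pair_weights[OF lo(1,2) r, of _ t1 t2 "p < q"] in \<open>simp add: g2_def Q_def w2\<close>)
  have mu1: "ss_measure c t1 t2 p = distr ?S borel (ser c g1)"
    by (rule ss_measure_eq[OF ss1 c]) (use p in auto)
  have mu2: "ss_measure c t1 t2 q = distr ?S borel (ser c g2)"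
    by (rule ss_measure_eq[OF ss2 c]) (use q in auto)
  define F where "F = (\<lambda>\<omega>. (ser c g1 \<omega>, ser c g2 \<omega>))"
  have Fm: "F \<in> measurable ?S (borel \<Otimes>\<^sub>M borel)" unfolding F_def by measurable
  define \<gamma> where "\<gamma> = distr ?S (borel \<Otimes>\<^sub>M borel) F"
  have cpl: "\<gamma> \<in> couplings (ss_measure c t1 t2 p) (ss_measure c t1 t2 q)"
    unfolding couplings_def mem_Collect_eq
  proof (intro conjI)
    show "sets \<gamma> = sets (borel \<Otimes>\<^sub>M borel)" unfolding \<gamma>_def by simp
    show "prob_space \<gamma>" unfolding \<gamma>_def by (rule S.prob_space_distr[OF Fm])
    have "emeasure \<gamma> ({0..1} \<times> {0..1}) = emeasure ?S (F -` ({0..1} \<times> {0..1}) \<inter> space ?S)"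
      unfolding \<gamma>_def by (rule emeasure_distr[OF Fm]) auto
    also have "F -` ({0..1} \<times> {0..1}) \<inter> space ?S = space ?S"
      using ser_unit[OF c gb1] ser_unit[OF c gb2] by (auto simp: F_def)
    finally show "emeasure \<gamma> ({0..1} \<times> {0..1}) = 1" using S.emeasure_space_1 by simp
    show "distr \<gamma> borel fst = ss_measure c t1 t2 p"
      unfolding \<gamma>_def mu1 by (subst distr_distr[OF _ Fm]) (auto simp: F_def comp_def)
    show "distr \<gamma> borel snd = ss_measure c t1 t2 q"
      unfolding \<gamma>_def mu2 by (subst distr_distr[OF _ Fm]) (auto simp: F_def comp_def)
  qed
  have sd: "ser c h \<omega> = ser c g1 \<omega> - ser c g2 \<omega>" for \<omega>
    unfolding h_def by (rule ser_diff[OF _ c(2) B1 B2]) (use c in auto)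
  have fin: "finite (set_pmf Q)" by simp
  define E1 where "E1 = (\<integral>\<omega>. ser c h \<omega> \<partial>?S)"
  define E2 where "E2 = (\<integral>\<omega>. (ser c h \<omega>)^2 \<partial>?S)"
  have Ih: "(\<integral>x. h x \<partial>measure_pmf Q) = (p - q) * (t1 - t2)"
  proof -
    have "(\<integral>x. h x \<partial>measure_pmf Q) = (if q < p then t1 - t2 else t2 - t1) * ((1 - lo) * r)"
      unfolding Q_def pair_integral[OF lo(1,2) r] using pq by (auto simp: h_def g1_def g2_def tau_def)
    then show ?thesis unfolding lor using pq by (auto simp: abs_if algebra_simps)
  qed
  have Ih2: "(\<integral>x. (h x)^2 \<partial>measure_pmf Q) = \<bar>p - q\<bar> * (t1 - t2)^2"
  proof -
    have "(\<integral>x. (h x)^2 \<partial>measure_pmf Q) = (t1 - t2)^2 * ((1 - lo) * r)"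
      unfolding Q_def pair_integral[OF lo(1,2) r] using pq by (auto simp: h_def g1_def g2_def tau_def power2_commute)
    then show ?thesis unfolding lor by simp
  qed
  have mom1: "(1 - c) * E1 = (p - q) * (t1 - t2)"
    using ser_moments(1)[of c h 1 Q] c Bh Ih by (simp add: E1_def)
  have mom2: "(1 - c^2) * E2 = 2 * c * E1 * ((p - q) * (t1 - t2)) + \<bar>p - q\<bar> * (t1 - t2)^2"
    using ser_moments(2)[of c h 1 Q] c Bh Ih Ih2 by (simp add: E1_def E2_def)
  have E2v: "E2 = ((t2 - t1) / (1 - c))^2 * ((2 * c * (p - q)^2 + (1 - c) * \<bar>p - q\<bar>) / (1 + c))"
  proof -
    have E1v: "E1 = (p - q) * (t1 - t2) / (1 - c)" using mom1 c by (simp add: field_simps)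
    have cc: "(1 - c^2) = (1 - c) * (1 + c)" by (simp add: power2_eq_square algebra_simps)
    have nz: "1 - c^2 \<noteq> 0" using c unfolding cc by simp
    have "E2 = (2 * c * E1 * ((p - q) * (t1 - t2)) + \<bar>p - q\<bar> * (t1 - t2)^2) / (1 - c^2)"
      using mom2 nz by (simp add: eq_divide_eq mult.commute)
    then have "E2 = (2 * c * E1 * ((p - q) * (t1 - t2)) + \<bar>p - q\<bar> * (t1 - t2)^2) / ((1 - c) * (1 + c))"
      unfolding cc .
    then show ?thesis unfolding E1v using c by (simp add: field_simps power2_eq_square)
  qed
  have Yb2: "\<bar>(ser c h \<omega>)^2\<bar> \<le> 1" for \<omega>
  proof -
    have "\<bar>ser c h \<omega>\<bar> \<le> 1" using ser_unit[where \<omega>=\<omega> and g=g1, OF c gb1] ser_unit[where \<omega>=\<omega> and g=g2, OF c gb2] sd[of \<omega>] by auto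
    then have "\<bar>ser c h \<omega>\<bar>^2 \<le> 1^2" by (intro power_mono) auto
    then show ?thesis by simp
  qed
  have iY2: "integrable ?S (\<lambda>\<omega>. (ser c h \<omega>)^2)"
    by (rule S.integrable_const_bound[where B=1]) (use Yb2 in auto)
  have "(\<integral>\<^sup>+z. ennreal (\<bar>fst z - snd z\<bar> powr 2) \<partial>\<gamma>) = (\<integral>\<^sup>+\<omega>. ennreal (\<bar>fst (F \<omega>) - snd (F \<omega>)\<bar> powr 2) \<partial>?S)"
    unfolding \<gamma>_def by (rule nn_integral_distr[OF Fm]) measurable
  also have "\<dots> = (\<integral>\<^sup>+\<omega>. ennreal ((ser c h \<omega>)^2) \<partial>?S)"
    by (intro nn_integral_cong) (simp add: F_def sd)
  also have "\<dots> = ennreal E2"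
    unfolding E2_def by (rule nn_integral_eq_integral[OF iY2]) simp
  finally show ?thesis using cpl E2v by auto
qed

theorem corollary2p7:
  fixes c t1 t2 p q :: real
  assumes "0 < c" "c \<le> 1/2"
    and "0 \<le> t1" "t1 \<le> 1 - 2*c"
    and "t1 + c \<le> t2" "t2 \<le> 1 - c"
    and "0 < p" "p < 1" "0 < q" "q < 1" "p \<noteq> q"
  shows "(t2 - t1) / (1 - c) * \<bar>p - q\<bar>
           \<le> wasserstein 2 (ss_measure c t1 t2 p) (ss_measure c t1 t2 q) \<and>
         wasserstein 2 (ss_measure c t1 t2 p) (ss_measure c t1 t2 q)
           \<le> (t2 - t1) / (1 - c) *
             sqrt ((2 * c * (p - q)^2 + (1 - c) * \<bar>p - q\<bar>) / (1 + c))"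
proof -
  have c: "0 < c" "c < 1" using assms by auto
  have t: "0 \<le> t1" "t1 \<le> 1 - c" "0 \<le> t2" "t2 \<le> 1 - c" using assms by auto
  let ?\<mu> = "ss_measure c t1 t2 p" and ?\<nu> = "ss_measure c t1 t2 q"
  let ?J = "\<lambda>\<gamma>. \<integral>\<^sup>+z. ennreal (\<bar>fst z - snd z\<bar> powr 2) \<partial>\<gamma>"
  define I where "I = (INF \<gamma>\<in>couplings ?\<mu> ?\<nu>. ?J \<gamma>)"
  define L where "L = (t2 - t1) / (1 - c) * \<bar>p - q\<bar>"
  define Q where "Q = (2 * c * (p - q)^2 + (1 - c) * \<bar>p - q\<bar>) / (1 + c)"
  define V where "V = ((t2 - t1) / (1 - c))^2 * Q"
  have L0: "0 \<le> L" unfolding L_def using assms by (intro mult_nonneg_nonneg divide_nonneg_nonneg) auto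
  have Q0: "0 \<le> Q" unfolding Q_def using assms
    by (intro mult_nonneg_nonneg divide_nonneg_nonneg add_nonneg_nonneg) auto
  have V0: "0 \<le> V" unfolding V_def using Q0 by (intro mult_nonneg_nonneg) auto
  have W: "wasserstein 2 ?\<mu> ?\<nu> = sqrt (enn2real I)"
    unfolding wasserstein_def I_def[symmetric] by (rule powr_half_sqrt) simp
  obtain \<gamma>0 where g0: "\<gamma>0 \<in> couplings ?\<mu> ?\<nu>" and J0: "?J \<gamma>0 = ennreal V"
    using coupling_upper[OF c t assms(7,8,9,10,11)] unfolding V_def Q_def by blast
  have IV: "I \<le> ennreal V" unfolding I_def by (rule INF_lower2[OF g0]) (simp only: J0 order_refl)
  have mp: "(\<integral>x. clip x \<partial>?\<mu>) = (p * t1 + (1 - p) * t2) / (1 - c)"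
    by (rule ss_mean[OF c t]) (use assms in auto)
  have mq: "(\<integral>x. clip x \<partial>?\<nu>) = (q * t1 + (1 - q) * t2) / (1 - c)"
    by (rule ss_mean[OF c t]) (use assms in auto)
  have Ld: "((\<integral>x. clip x \<partial>?\<mu>) - (\<integral>x. clip x \<partial>?\<nu>))^2 = L^2"
  proof -
    have "(\<integral>x. clip x \<partial>?\<mu>) - (\<integral>x. clip x \<partial>?\<nu>) = (p - q) * (t1 - t2) / (1 - c)"
    proof -
      have e: "p * t1 + (1 - p) * t2 - (q * t1 + (1 - q) * t2) = (p - q) * (t1 - t2)" by (simp add: algebra_simps)
      show ?thesis unfolding mp mq diff_divide_distrib[symmetric] e ..
    qed
    moreover have ab: "\<bar>(p - q) * (t1 - t2) / (1 - c)\<bar> = L"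
      unfolding L_def using assms by (simp add: abs_mult abs_divide)
    ultimately show ?thesis by (metis power2_abs)
  qed
  have LI: "ennreal (L^2) \<le> I"
    unfolding I_def
  proof (rule INF_greatest)
    fix \<gamma> assume "\<gamma> \<in> couplings ?\<mu> ?\<nu>"
    from coupling_lower[OF this] show "ennreal (L^2) \<le> ?J \<gamma>" unfolding Ld .
  qed
  have It: "I < top" using IV ennreal_less_top le_less_trans by blast
  have e1: "L^2 \<le> enn2real I"
    using enn2real_mono[OF LI It] by simp
  have e2: "enn2real I \<le> V"
    using enn2real_mono[OF IV] V0 by simp
  have "L = sqrt (L^2)" using L0 by simp
  also have "\<dots> \<le> sqrt (enn2real I)" using e1 by (rule real_sqrt_le_mono)
  finally have lower: "L \<le> wasserstein 2 ?\<mu> ?\<nu>" unfolding W .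
  have "sqrt (enn2real I) \<le> sqrt V" using e2 by simp
  also have "sqrt V = (t2 - t1) / (1 - c) * sqrt Q"
    unfolding V_def real_sqrt_mult real_sqrt_abs using assms by simp
  finally have upper: "wasserstein 2 ?\<mu> ?\<nu> \<le> (t2 - t1) / (1 - c) * sqrt Q" unfolding W .
  show ?thesis using lower upper unfolding L_def Q_def by (rule conjI)
qed

end
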